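(* For all $1\le k\le n$ and $a\in\mathbb{N}_0$, in $A_n$ we have \[ \omega_k^a = \sum_{\ell = 1}^{k} (-1)^{a+k+\ell}\, h_{a+\ell-k}(x_\ell,\dots,x_k)\, \omega_{\ell}, \] where $h_j(x_\ell,\dots,x_k)$ is the $j$-th complete homogeneous symmetric polynomial in $x_\ell,\dots,x_k$ (zero for $j<0$).
   Context: $A_n$ is the bigraded $\mathbb{Z}$-superalgebra of operators on $R=\mathbb{Z}[x_1,\dots,x_n]\otimes\bigwedge^\bullet(\omega_1,\dots,\omega_n)$ generated by the Demazure operators and multiplication by elements of $R$; in particular it contains the (commuting, even) $x_i$ and (anticommuting, odd) $\omega_i$. Labeled elements are defined recursively by $\omega_k^0=\omega_k$, $\omega_0^a=0$, and $\omega_k^a=\omega_{k-1}^{a-1}-x_k\omega_k^{a-1}$ for $a\ge1$. *)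

theory Defs
  imports Main "HOL-Library.Poly_Mapping"
begin

type_synonym xpoly = "(nat \<Rightarrow>\<^sub>0 nat) \<Rightarrow>\<^sub>0 int"

text \<open>The superalgebra R = Z[x] tensor Lambda(omega): an element is a family of
  polynomial coefficients indexed by (finite) sets S of omega-indices; the set S stands
  for the wedge product of omega_s, s in S, in increasing order.\<close>
type_synonym relt = "nat set \<Rightarrow> xpoly"

text \<open>Sign of reordering omega_S omega_T (S, T disjoint) into increasing order.\<close>
definition ext_sign :: "nat set \<Rightarrow> nat set \<Rightarrow> xpoly" where
  "ext_sign S T = (-1) ^ card {(s, t). s \<in> S \<and> t \<in> T \<and> t < s}"

definition rmul :: "relt \<Rightarrow> relt \<Rightarrow> relt" where
  "rmul f g = (\<lambda>U. \<Sum>S\<in>Pow U. ext_sign S (U - S) * f S * g (U - S))"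

definition rzero :: relt where
  "rzero = (\<lambda>_. 0)"

definition rsub :: "relt \<Rightarrow> relt \<Rightarrow> relt" where
  "rsub f g = (\<lambda>U. f U - g U)"

definition even_elt :: "xpoly \<Rightarrow> relt" where
  "even_elt p = (\<lambda>U. if U = {} then p else 0)"

definition xvar_poly :: "nat \<Rightarrow> xpoly" where
  "xvar_poly i = Poly_Mapping.single (Poly_Mapping.single i 1) 1"

definition xvar :: "nat \<Rightarrow> relt" where
  "xvar i = even_elt (xvar_poly i)"

definition omega :: "nat \<Rightarrow> relt" where
  "omega i = (\<lambda>U. if U = {i} then 1 else 0)"

fun omega_lab :: "nat \<Rightarrow> nat \<Rightarrow> relt" where
  "omega_lab 0 a = rzero"
| "omega_lab (Suc k) 0 = omega (Suc k)"
| "omega_lab (Suc k) (Suc a) =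
     rsub (omega_lab k a) (rmul (xvar (Suc k)) (omega_lab (Suc k) a))"

definition hcs :: "int \<Rightarrow> nat \<Rightarrow> nat \<Rightarrow> xpoly" where
  "hcs j l k = (if j < 0 then 0 else
     (\<Sum>m\<in>{m :: nat \<Rightarrow>\<^sub>0 nat. Poly_Mapping.keys m \<subseteq> {l..k} \<and> (\<Sum>i\<in>Poly_Mapping.keys m. Poly_Mapping.lookup m i) = nat j}.
        Poly_Mapping.single m 1))"

end

theory Submission
  imports Defs
begin

definition Mset :: "nat \<Rightarrow> nat \<Rightarrow> nat \<Rightarrow> (nat \<Rightarrow>\<^sub>0 nat) set" where
  "Mset d l k = {m. (\<forall>i. i \<notin> {l..k} \<longrightarrow> Poly_Mapping.lookup m i = 0) \<and> (\<Sum>i\<in>{l..k}. Poly_Mapping.lookup m i) = d}"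

lemma keys_sub_iff: "Poly_Mapping.keys m \<subseteq> A \<longleftrightarrow> (\<forall>i. i \<notin> A \<longrightarrow> Poly_Mapping.lookup m i = 0)"
  by (auto simp: in_keys_iff)

lemma sum_keys: "Poly_Mapping.keys (m :: nat \<Rightarrow>\<^sub>0 nat) \<subseteq> {l..k} \<Longrightarrow>
   (\<Sum>i\<in>Poly_Mapping.keys m. Poly_Mapping.lookup m i) = (\<Sum>i\<in>{l..k}. Poly_Mapping.lookup m i)"
  by (rule sum.mono_neutral_left) (auto simp: in_keys_iff)

lemma hcs_alt: "hcs j l k = (if j < 0 then 0 else \<Sum>m\<in>Mset (nat j) l k. Poly_Mapping.single m 1)"
proof -
  have "{m :: nat \<Rightarrow>\<^sub>0 nat. Poly_Mapping.keys m \<subseteq> {l..k} \<and> (\<Sum>i\<in>Poly_Mapping.keys m. Poly_Mapping.lookup m i) = nat j}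
     = Mset (nat j) l k"
  proof (intro equalityI subsetI)
    fix m assume "m \<in> {m :: nat \<Rightarrow>\<^sub>0 nat. Poly_Mapping.keys m \<subseteq> {l..k} \<and> (\<Sum>i\<in>Poly_Mapping.keys m. Poly_Mapping.lookup m i) = nat j}"
    then have "Poly_Mapping.keys m \<subseteq> {l..k}" "(\<Sum>i\<in>Poly_Mapping.keys m. Poly_Mapping.lookup m i) = nat j" by auto
    then show "m \<in> Mset (nat j) l k" unfolding Mset_def using sum_keys[of m l k] keys_sub_iff[of m] by simp
  next
    fix m assume "m \<in> Mset (nat j) l k"
    then have a: "\<forall>i. i \<notin> {l..k} \<longrightarrow> Poly_Mapping.lookup m i = 0" and b: "(\<Sum>i\<in>{l..k}. Poly_Mapping.lookup m i) = nat j"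
      unfolding Mset_def by auto
    have c: "Poly_Mapping.keys m \<subseteq> {l..k}" using a keys_sub_iff[of m] by simp
    show "m \<in> {m :: nat \<Rightarrow>\<^sub>0 nat. Poly_Mapping.keys m \<subseteq> {l..k} \<and> (\<Sum>i\<in>Poly_Mapping.keys m. Poly_Mapping.lookup m i) = nat j}"
      using b c sum_keys[OF c] by simp
  qed
  then show ?thesis unfolding hcs_def by simp
qed

lemma Mset_finite: "finite (Mset d l k)"
proof -
  have "Poly_Mapping.lookup ` Mset d l k \<subseteq> {f. \<forall>x. (x \<in> {l..k} \<longrightarrow> f x \<in> {0..d}) \<and> (x \<notin> {l..k} \<longrightarrow> f x = 0)}"
  proof safe
    fix m x assume "m \<in> Mset d l k" "x \<in> {l..k}"
    then show "Poly_Mapping.lookup m x \<in> {0..d}"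
      unfolding Mset_def using member_le_sum[of x "{l..k}" "Poly_Mapping.lookup m"] by auto
  qed (auto simp: Mset_def)
  then have "finite (Poly_Mapping.lookup ` Mset d l k)"
    by (rule finite_subset) (rule finite_set_of_finite_funs; simp)
  then show ?thesis
    by (rule finite_imageD) (auto intro!: inj_onI poly_mapping_eqI)
qed

lemma Mset_0: "Mset 0 l k = {0}"
proof -
  have "m = 0" if "m \<in> Mset 0 l k" for m
  proof (rule poly_mapping_eqI)
    fix i show "Poly_Mapping.lookup m i = Poly_Mapping.lookup 0 i"
      using that unfolding Mset_def by (cases "i \<in> {l..k}") auto
  qed
  then show ?thesis by (auto simp: Mset_def)
qed

lemma hcs_0: "hcs 0 l k = 1"
  by (simp add: hcs_alt Mset_0 one_poly_mapping.abs_eq)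

lemma hcs_neg: "j < 0 \<Longrightarrow> hcs j l k = 0"
  by (simp add: hcs_def)

lemma hcs_empty: "hcs j (Suc k) k = (if j = 0 then 1 else 0)"
proof (cases "j = 0")
  case True then show ?thesis by (simp add: hcs_0)
next
  case False
  then have "j < 0 \<or> nat j \<noteq> 0" by auto
  then show ?thesis
  proof
    assume "nat j \<noteq> 0"
    then have "Mset (nat j) (Suc k) k = {}" by (auto simp: Mset_def)
    then show ?thesis using False by (simp add: hcs_alt)
  qed (simp add: hcs_neg)
qed

lemma Mset_split:
  assumes "l \<le> Suc k"
  shows "Mset (Suc d) l (Suc k) = Mset (Suc d) l k \<union> (\<lambda>m. m + Poly_Mapping.single (Suc k) 1) ` Mset d l (Suc k)"
    (is "?L = ?A \<union> ?f ` ?B")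
proof -
  have iv: "{l..Suc k} = insert (Suc k) {l..k}" using assms by auto
  have sumeq: "(\<Sum>i\<in>{l..Suc k}. g i) = g (Suc k) + (\<Sum>i\<in>{l..k}. g i)" for g :: "nat \<Rightarrow> nat"
    unfolding iv by simp
  have lk: "Poly_Mapping.lookup (m + Poly_Mapping.single (Suc k) 1) i
      = Poly_Mapping.lookup m i + (if i = Suc k then 1 else 0)" for m :: "nat \<Rightarrow>\<^sub>0 nat" and i
    by (simp add: lookup_add lookup_single when_def)
  show ?thesis
  proof (intro equalityI subsetI)
    fix m assume m: "m \<in> ?L"
    show "m \<in> ?A \<union> ?f ` ?B"
    proof (cases "Poly_Mapping.lookup m (Suc k) = 0")
      case True
      have "\<forall>i. i \<notin> {l..k} \<longrightarrow> Poly_Mapping.lookup m i = 0"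
      proof (intro allI impI)
        fix i assume "i \<notin> {l..k}"
        then have "i = Suc k \<or> i \<notin> {l..Suc k}" by auto
        then show "Poly_Mapping.lookup m i = 0" using m True unfolding Mset_def by auto
      qed
      then have "m \<in> ?A" using m True unfolding Mset_def sumeq by auto
      then show ?thesis by blast
    next
      case False
      define m' where "m' = m - Poly_Mapping.single (Suc k) 1"
      have lm': "Poly_Mapping.lookup m' i = Poly_Mapping.lookup m i - (if i = Suc k then 1 else 0)" for i
        unfolding m'_def by (simp add: lookup_minus lookup_single when_def)
      have "m = ?f m'"
      proof (rule poly_mapping_eqI)
        fix i show "Poly_Mapping.lookup m i = Poly_Mapping.lookup (?f m') i"
          by (simp only: lk lm') (use False in auto)
      qed
      moreover have "m' \<in> ?B"
        using m False unfolding Mset_def sumeq by (auto simp: lm' iv)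
      ultimately show ?thesis by blast
    qed
  next
    fix m assume "m \<in> ?A \<union> ?f ` ?B"
    then show "m \<in> ?L"
    proof
      assume "m \<in> ?A" then show ?thesis unfolding Mset_def sumeq by auto
    next
      assume "m \<in> ?f ` ?B"
      then obtain m' where "m' \<in> ?B" "m = ?f m'" by blast
      then show ?thesis unfolding Mset_def sumeq
        by (auto simp: lookup_add lookup_single when_def iv)
    qed
  qed
qed

lemma hcs_rec:
  assumes "l \<le> Suc k"
  shows "hcs j l (Suc k) = hcs j l k + xvar_poly (Suc k) * hcs (j - 1) l (Suc k)"
proof (cases "j \<le> 0")
  case True
  then show ?thesis
  proof (cases "j = 0")
    case True
    then show ?thesis by (simp add: hcs_0 hcs_neg)
  next
    case False
    with \<open>j \<le> 0\<close> have "j < 0" "j - 1 < 0" by auto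
    then show ?thesis by (simp add: hcs_neg)
  qed
next
  case False
  define d where "d = nat j - 1"
  have d: "j = int (Suc d)" using False unfolding d_def by simp
  let ?f = "\<lambda>m. m + Poly_Mapping.single (Suc k) 1"
  have disj: "Mset (Suc d) l k \<inter> ?f ` Mset d l (Suc k) = {}"
  proof (rule ccontr)
    assume "Mset (Suc d) l k \<inter> ?f ` Mset d l (Suc k) \<noteq> {}"
    then obtain m' where m': "?f m' \<in> Mset (Suc d) l k" by blast
    then have "Poly_Mapping.lookup (?f m') (Suc k) = 0" unfolding Mset_def by auto
    then show False by (simp add: lookup_add)
  qed
  have inj: "inj_on ?f (Mset d l (Suc k))" by (rule inj_onI) simp
  have "hcs j l (Suc k) = (\<Sum>m\<in>Mset (Suc d) l k. Poly_Mapping.single m 1)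
      + (\<Sum>m\<in>?f ` Mset d l (Suc k). Poly_Mapping.single m (1::int))"
  proof -
    have "hcs j l (Suc k) = (\<Sum>m\<in>Mset (Suc d) l (Suc k). Poly_Mapping.single m 1)"
      unfolding hcs_alt d nat_int by simp
    also have "\<dots> = (\<Sum>m\<in>Mset (Suc d) l k \<union> ?f ` Mset d l (Suc k). Poly_Mapping.single m 1)"
      by (simp only: Mset_split[OF assms])
    also have "\<dots> = (\<Sum>m\<in>Mset (Suc d) l k. Poly_Mapping.single m 1)
      + (\<Sum>m\<in>?f ` Mset d l (Suc k). Poly_Mapping.single m (1::int))"
      by (rule sum.union_disjoint[OF Mset_finite finite_imageI[OF Mset_finite] disj])
    finally show ?thesis .
  qed
  also have "(\<Sum>m\<in>?f ` Mset d l (Suc k). Poly_Mapping.single m (1::int))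
     = xvar_poly (Suc k) * (\<Sum>m\<in>Mset d l (Suc k). Poly_Mapping.single m 1)"
  proof -
    have "(\<Sum>m\<in>?f ` Mset d l (Suc k). Poly_Mapping.single m (1::int))
        = (\<Sum>m\<in>Mset d l (Suc k). Poly_Mapping.single (?f m) (1::int))"
      by (rule sum.reindex_cong[OF inj refl]) simp
    also have "\<dots> = xvar_poly (Suc k) * (\<Sum>m\<in>Mset d l (Suc k). Poly_Mapping.single m 1)"
      unfolding sum_distrib_left xvar_poly_def mult_single by (simp add: add.commute)
    finally show ?thesis .
  qed
  finally show ?thesis unfolding hcs_alt d nat_int by simp
qed

lemma rmul_even:
  assumes "infinite U \<Longrightarrow> f U = 0"
  shows "rmul (even_elt p) f U = p * f U"
proof (cases "finite U")
  case True
  have "rmul (even_elt p) f U = (\<Sum>S\<in>Pow U. ext_sign S (U - S) * even_elt p S * f (U - S))"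
    by (simp add: rmul_def)
  also have "\<dots> = ext_sign {} (U - {}) * even_elt p {} * f (U - {})
     + (\<Sum>S\<in>Pow U - {{}}. ext_sign S (U - S) * even_elt p S * f (U - S))"
    by (rule sum.remove) (use True in auto)
  also have "(\<Sum>S\<in>Pow U - {{}}. ext_sign S (U - S) * even_elt p S * f (U - S)) = 0"
    by (rule sum.neutral) (auto simp: even_elt_def)
  also have "ext_sign {} (U - {}) * even_elt p {} * f (U - {}) + 0 = p * f U" by (simp add: ext_sign_def even_elt_def)
  finally show ?thesis .
next
  case False
  then show ?thesis using assms by (simp add: rmul_def)
qed

lemma omega_infinite: "infinite U \<Longrightarrow> omega l U = 0"
  by (auto simp: omega_def)

lemma rmul_even_omega: "rmul (even_elt p) (omega l) U = p * omega l U"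
  by (rule rmul_even) (simp add: omega_infinite)

definition Fk :: "nat \<Rightarrow> nat \<Rightarrow> relt" where
  "Fk k a = (\<lambda>U. \<Sum>l\<in>{1..k}. (-1) ^ (a + k + l) * hcs (int a + int l - int k) l k * omega l U)"

lemma Fk_infinite: "infinite U \<Longrightarrow> Fk k a U = 0"
  by (simp add: Fk_def omega_infinite)

lemma main: "omega_lab k a = Fk k a"
proof (induction k a rule: omega_lab.induct)
  case (1 a)
  then show ?case by (simp add: Fk_def rzero_def)
next
  case (2 k)
  show ?case
  proof
    fix U
    have "Fk (Suc k) 0 U = (-1) ^ (0 + Suc k + Suc k) * hcs (int 0 + int (Suc k) - int (Suc k)) (Suc k) (Suc k) * omega (Suc k) U
       + (\<Sum>l\<in>{1..k}. (-1) ^ (0 + Suc k + l) * hcs (int 0 + int l - int (Suc k)) l (Suc k) * omega l U)"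
      unfolding Fk_def by (simp add: atLeastAtMostSuc_conv)
    also have "(\<Sum>l\<in>{1..k}. (-1) ^ (0 + Suc k + l) * hcs (int 0 + int l - int (Suc k)) l (Suc k) * omega l U) = 0"
      by (rule sum.neutral) (auto simp: hcs_neg)
    finally show "omega_lab (Suc k) 0 U = Fk (Suc k) 0 U"
      by (simp add: hcs_0 flip: mult_2)
  qed
next
  case (3 k a)
  show ?case
  proof
    fix U
    let ?K = "Suc k"
    let ?x = "xvar_poly ?K"
    let ?s = "\<lambda>l. (-1::xpoly) ^ (Suc a + ?K + l)"
    let ?j = "\<lambda>l. int (Suc a) + int l - int ?K"
    have e1: "Fk k a U = (\<Sum>l\<in>{1..?K}. ?s l * hcs (?j l) l k * omega l U)"
    proof -
      have "Fk k a U = (\<Sum>l\<in>{1..k}. ?s l * hcs (?j l) l k * omega l U)"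
        unfolding Fk_def by (rule sum.cong) (auto simp: power_add add_diff_eq)
      also have "\<dots> = (\<Sum>l\<in>{1..?K}. ?s l * hcs (?j l) l k * omega l U)"
        by (simp add: atLeastAtMostSuc_conv hcs_empty)
      finally show ?thesis .
    qed
    have e2: "?x * Fk ?K a U = (\<Sum>l\<in>{1..?K}. - (?s l * (?x * hcs (?j l - 1) l ?K) * omega l U))"
      unfolding Fk_def sum_distrib_left
    proof (rule sum.cong[OF refl])
      fix l
      have j: "?j l - 1 = int a + int l - int ?K" by simp
      have sg: "?s l = - ((-1) ^ (a + ?K + l))" by simp
      show "?x * ((-1) ^ (a + ?K + l) * hcs (int a + int l - int ?K) l ?K * omega l U)
          = - (?s l * (?x * hcs (?j l - 1) l ?K) * omega l U)"
        unfolding j sg by (simp add: mult_ac)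
    qed
    have "omega_lab ?K (Suc a) U = Fk k a U - ?x * Fk ?K a U"
      using 3 by (simp add: rsub_def xvar_def rmul_even Fk_infinite)
    also have "\<dots> = (\<Sum>l\<in>{1..?K}. ?s l * hcs (?j l) l k * omega l U + ?s l * (?x * hcs (?j l - 1) l ?K) * omega l U)"
      unfolding e1 e2 sum_negf sum.distrib by simp
    also have "\<dots> = (\<Sum>l\<in>{1..?K}. ?s l * hcs (?j l) l ?K * omega l U)"
    proof (rule sum.cong[OF refl])
      fix l assume l: "l \<in> {1..?K}"
      have "hcs (?j l) l ?K = hcs (?j l) l k + ?x * hcs (?j l - 1) l ?K"
        by (rule hcs_rec) (use l in auto)
      then show "?s l * hcs (?j l) l k * omega l U + ?s l * (?x * hcs (?j l - 1) l ?K) * omega l U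
          = ?s l * hcs (?j l) l ?K * omega l U"
        by (simp only: distrib_left distrib_right)
    qed
    also have "\<dots> = Fk ?K (Suc a) U" unfolding Fk_def by simp
    finally show "omega_lab ?K (Suc a) U = Fk ?K (Suc a) U" .
  qed
qed

theorem lemma2p3:
  fixes n k a :: nat
  assumes "1 \<le> k" and "k \<le> n"
  shows "omega_lab k a =
    (\<lambda>U. \<Sum>l\<in>{1..k}.
       rmul (even_elt ((-1) ^ (a + k + l) * hcs (int a + int l - int k) l k)) (omega l) U)"
  unfolding main Fk_def rmul_even_omega ..

end
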